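(* Every pseudospectral SBP operator has the eigenvalue property: if $D_+,D_-$ form a pair of SBP operators of order $q=n$ on $[a,b]$ with associated data $H,S,\mathbf{p}_0,\mathbf{p}_n,\mathbf{x}$ (where $\mathbf{x}\in\mathbb{R}^{n+1}$), then every eigenvalue of $\tilde D_+ = D_+ + H^{-1}\mathbf{p}_0\mathbf{p}_0^\top$ has strictly positive real part.
   Context: Let $[a,b]$ be an interval with $b>a$ and $n\ge 1$. For $\mathbf{x}\in\mathbb{R}^{n+1}$, $\mathbf{x}^j$ denotes elementwise exponentiation, with $\mathbf{x}^0=\mathbf{1}=(1,\dots,1)^\top$. Matrices $D_+, D_-\in\mathbb{R}^{(n+1)\times(n+1)}$ form a pair of SBP (summation-by-parts) operators of order $q\ge 1$ on $[a,b]$ if there exist matrices $H,S\in\mathbb{R}^{(n+1)\times(n+1)}$ and vectors $\mathbf{p}_0,\mathbf{p}_n,\mathbf{x}\in\mathbb{R}^{n+1}$ such that: (A) $D_\pm \mathbf{x}^j = j\mathbf{x}^{j-1}$, $\mathbf{p}_0^\top\mathbf{x}^j = a^j$, $\mathbf{p}_n^\top \mathbf{x}^j = b^j$ for $j=0,\dots,q$ (with $0\cdot\mathbf{x}^{-1}:=\mathbf{0}$); (B) $H=H^\top$ is positive definite; (C) $HD_+ + D_+^\top H = -\mathbf{p}_0\mathbf{p}_0^\top + \mathbf{p}_n\mathbf{p}_n^\top + S$ with $S=S^\top$ positive semidefinite; (D) $HD_+ + D_-^\top H = -\mathbf{p}_0\mathbf{p}_0^\top + \mathbf{p}_n\mathbf{p}_n^\top$;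 (E) $\mathbf{x}=(x_0,\dots,x_n)^\top$ with $x_i\ne x_j$ for $i\ne j$. A pseudospectral SBP operator is a pair of SBP operators of order $q=n$ (i.e. the order equals the number of nodes minus one). The SBP operator has the eigenvalue property if every eigenvalue of $\tilde D_+ := D_+ + H^{-1}\mathbf{p}_0\mathbf{p}_0^\top$ has strictly positive real part. *)

theory Defs
  imports Complex_Main "Jordan_Normal_Form.Matrix" "Jordan_Normal_Form.Char_Poly"
begin

definition vpow :: "real vec \<Rightarrow> nat \<Rightarrow> real vec" where
  "vpow x j = vec (dim_vec x) (\<lambda>i. (x $ i) ^ j)"

definition outer :: "real vec \<Rightarrow> real vec \<Rightarrow> real mat" where
  "outer p q = mat (dim_vec p) (dim_vec q) (\<lambda>(i,j). p $ i * q $ j)"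

definition pos_def_mat :: "real mat \<Rightarrow> bool" where
  "pos_def_mat H \<longleftrightarrow> H\<^sup>T = H \<and>
     (\<forall>v \<in> carrier_vec (dim_row H). v \<noteq> 0\<^sub>v (dim_row H) \<longrightarrow> v \<bullet> (H *\<^sub>v v) > 0)"

definition pos_semidef_mat :: "real mat \<Rightarrow> bool" where
  "pos_semidef_mat S \<longleftrightarrow> S\<^sup>T = S \<and>
     (\<forall>v \<in> carrier_vec (dim_row S). v \<bullet> (S *\<^sub>v v) \<ge> 0)"

text \<open>Matrix inverse (meaningful for invertible square matrices).\<close>
definition mat_inv :: "real mat \<Rightarrow> real mat" where
  "mat_inv H = (SOME B. B \<in> carrier_mat (dim_row H) (dim_row H) \<and>
                        H * B = 1\<^sub>m (dim_row H) \<and> B * H = 1\<^sub>m (dim_row H))"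

definition sbp_pair ::
  "nat \<Rightarrow> nat \<Rightarrow> real \<Rightarrow> real \<Rightarrow> real mat \<Rightarrow> real mat \<Rightarrow> real mat \<Rightarrow> real mat
   \<Rightarrow> real vec \<Rightarrow> real vec \<Rightarrow> real vec \<Rightarrow> bool" where
  "sbp_pair n q a b Dp Dm H S p0 pn x \<longleftrightarrow>
     Dp \<in> carrier_mat (n+1) (n+1) \<and> Dm \<in> carrier_mat (n+1) (n+1) \<and>
     H \<in> carrier_mat (n+1) (n+1) \<and> S \<in> carrier_mat (n+1) (n+1) \<and>
     p0 \<in> carrier_vec (n+1) \<and> pn \<in> carrier_vec (n+1) \<and> x \<in> carrier_vec (n+1) \<and>
     \<comment> \<open>(A) exactness\<close>
     (\<forall>j \<le> q.
        Dp *\<^sub>v vpow x j = (if j = 0 then 0\<^sub>v (n+1) else of_nat j \<cdot>\<^sub>v vpow x (j - 1)) \<and>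
        Dm *\<^sub>v vpow x j = (if j = 0 then 0\<^sub>v (n+1) else of_nat j \<cdot>\<^sub>v vpow x (j - 1)) \<and>
        p0 \<bullet> vpow x j = a ^ j \<and> pn \<bullet> vpow x j = b ^ j) \<and>
     \<comment> \<open>(B)\<close>
     pos_def_mat H \<and>
     \<comment> \<open>(C)\<close>
     H * Dp + Dp\<^sup>T * H = - outer p0 p0 + outer pn pn + S \<and> pos_semidef_mat S \<and>
     \<comment> \<open>(D)\<close>
     H * Dp + Dm\<^sup>T * H = - outer p0 p0 + outer pn pn \<and>
     \<comment> \<open>(E)\<close>
     (\<forall>i < n+1. \<forall>j < n+1. i \<noteq> j \<longrightarrow> x $ i \<noteq> x $ j)"

definition Dtilde :: "real mat \<Rightarrow> real mat \<Rightarrow> real vec \<Rightarrow> real mat" where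
  "Dtilde Dp H p0 = Dp + mat_inv H * outer p0 p0"

definition eigenvalue_property :: "real mat \<Rightarrow> real mat \<Rightarrow> real vec \<Rightarrow> bool" where
  "eigenvalue_property Dp H p0 \<longleftrightarrow>
     (\<forall>l::complex. eigenvalue (map_mat complex_of_real (Dtilde Dp H p0)) l \<longrightarrow> Re l > 0)"

end

theory Submission
  imports Defs
begin

definition ev :: "nat \<Rightarrow> real vec \<Rightarrow> real poly \<Rightarrow> real vec" where
  "ev n x p = vec (n+1) (\<lambda>k. poly p (x $ k))"

lemma poly_sum_bound:
  fixes p :: "real poly"
  assumes "degree p \<le> N"
  shows "poly p y = (\<Sum>j\<le>N. coeff p j * y ^ j)"
proof -
  have "poly p y = (\<Sum>j\<le>degree p. coeff p j * y ^ j)" by (rule poly_altdef)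
  also have "\<dots> = (\<Sum>j\<le>N. coeff p j * y ^ j)"
    by (rule sum.mono_neutral_left) (use assms in \<open>auto intro: coeff_eq_0 le_degree\<close>)
  finally show ?thesis .
qed

lemma scalar_ev:
  assumes u: "u \<in> carrier_vec (n+1)" and x: "x \<in> carrier_vec (n+1)" and d: "degree p \<le> n"
  shows "u \<bullet> ev n x p = (\<Sum>j\<le>n. coeff p j * (u \<bullet> vpow x j))"
proof -
  have "u \<bullet> ev n x p = (\<Sum>k<n+1. u $ k * (\<Sum>j\<le>n. coeff p j * (x $ k) ^ j))"
    using u by (simp add: scalar_prod_def ev_def poly_sum_bound[OF d] lessThan_atLeast0)
  also have "\<dots> = (\<Sum>k<n+1. \<Sum>j\<le>n. coeff p j * (u $ k * (x $ k) ^ j))"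
    by (simp only: sum_distrib_left mult_ac)
  also have "\<dots> = (\<Sum>j\<le>n. \<Sum>k<n+1. coeff p j * (u $ k * (x $ k) ^ j))"
    by (rule sum.swap)
  also have "\<dots> = (\<Sum>j\<le>n. coeff p j * (\<Sum>k<n+1. u $ k * (x $ k) ^ j))"
    by (simp only: sum_distrib_left)
  also have "\<dots> = (\<Sum>j\<le>n. coeff p j * (u \<bullet> vpow x j))"
    using u x by (simp add: scalar_prod_def vpow_def lessThan_atLeast0)
  finally show ?thesis .
qed

lemma ev_inj:
  assumes x: "x \<in> carrier_vec (n+1)" and dist: "\<forall>i < n+1. \<forall>j < n+1. i \<noteq> j \<longrightarrow> x $ i \<noteq> x $ j"
    and dp: "degree p \<le> n" and dq: "degree q \<le> n" and e: "ev n x p = ev n x q"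
  shows "p = q"
proof (rule ccontr)
  assume ne: "p \<noteq> q"
  let ?r = "p - q"
  have r0: "?r \<noteq> 0" using ne by simp
  have dr: "degree ?r \<le> n" using dp dq degree_diff_le by blast
  have "(\<lambda>k. x $ k) ` {..<n+1} \<subseteq> {y. poly ?r y = 0}"
  proof
    fix y assume "y \<in> (\<lambda>k. x $ k) ` {..<n+1}"
    then obtain k where k: "k < n+1" "y = x $ k" by auto
    have "ev n x p $ k = ev n x q $ k" using e by simp
    then show "y \<in> {y. poly ?r y = 0}" using k by (simp add: ev_def)
  qed
  moreover have "inj_on (\<lambda>k. x $ k) {..<n+1}"
  proof (rule inj_onI)
    fix i j assume "i \<in> {..<n+1}" "j \<in> {..<n+1}" "x $ i = x $ j"
    then show "i = j" using dist by (metis lessThan_iff)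
  qed
  then have "card ((\<lambda>k. x $ k) ` {..<n+1}) = n+1"
    by (simp add: card_image)
  ultimately have "n+1 \<le> card {y. poly ?r y = 0}"
    by (metis card_mono poly_roots_finite r0)
  also have "\<dots> \<le> degree ?r" by (rule card_poly_roots_bound[OF r0])
  finally show False using dr by simp
qed

definition lag :: "nat \<Rightarrow> real vec \<Rightarrow> nat \<Rightarrow> real poly" where
  "lag n x k = Polynomial.smult (1 / (\<Prod>i\<in>{..<n+1}-{k}. (x $ k - x $ i))) (\<Prod>i\<in>{..<n+1}-{k}. [:- (x $ i), 1:])"

lemma lag_deg: "k < n+1 \<Longrightarrow> degree (lag n x k) \<le> n"
proof -
  assume k: "k < n+1"
  have "degree (\<Prod>i\<in>{..<n+1}-{k}. [:- (x $ i), 1:]) \<le> (\<Sum>i\<in>{..<n+1}-{k}. degree [:- (x $ i), 1:])"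
    by (rule degree_prod_sum_le[unfolded o_def]) simp
  also have "\<dots> = n" using k by simp
  finally show ?thesis unfolding lag_def by (meson degree_smult_le le_trans)
qed

lemma lag_val:
  assumes dist: "\<forall>i < n+1. \<forall>j < n+1. i \<noteq> j \<longrightarrow> x $ i \<noteq> x $ j" and k: "k < n+1" and m: "m < n+1"
  shows "poly (lag n x k) (x $ m) = (if m = k then 1 else 0)"
proof (cases "m = k")
  case True
  have "(\<Prod>i\<in>{..<n+1}-{k}. (x $ k - x $ i)) \<noteq> 0"
    using dist k by (auto simp: prod_zero_iff)
  then show ?thesis using True by (simp add: lag_def poly_prod)
next
  case False
  have "(\<Prod>i\<in>{..<n+1}-{k}. poly [:- (x $ i), 1:] (x $ m)) = 0"
    using False m by auto
  then show ?thesis using False by (simp add: lag_def poly_prod)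
qed

lemma ev_surj:
  assumes x: "x \<in> carrier_vec (n+1)" and dist: "\<forall>i < n+1. \<forall>j < n+1. i \<noteq> j \<longrightarrow> x $ i \<noteq> x $ j"
    and w: "w \<in> carrier_vec (n+1)"
  shows "\<exists>p. degree p \<le> n \<and> w = ev n x p"
proof -
  let ?p = "\<Sum>k<n+1. Polynomial.smult (w $ k) (lag n x k)"
  have "degree ?p \<le> n"
    by (rule degree_sum_le) (use lag_deg[of _ n x] in \<open>auto intro: le_trans[OF degree_smult_le]\<close>)
  moreover have "w = ev n x ?p"
  proof (rule eq_vecI)
    fix m assume "m < dim_vec (ev n x ?p)"
    then have m: "m < n+1" by (simp add: ev_def)
    have "poly ?p (x $ m) = (\<Sum>k<n+1. w $ k * (if m = k then 1 else 0))"
      by (simp add: poly_sum lag_val[OF dist _ m])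
    also have "\<dots> = (\<Sum>k<n+1. if k = m then w $ k else 0)" by (rule sum.cong) auto
    also have "\<dots> = w $ m" using m by (simp only: sum.delta finite_lessThan) simp
    finally show "w $ m = ev n x ?p $ m" using m by (simp add: ev_def)
  qed (use w in \<open>simp add: ev_def\<close>)
  ultimately show ?thesis by blast
qed

lemma Dp_ev:
  assumes D: "D \<in> carrier_mat (n+1) (n+1)" and x: "x \<in> carrier_vec (n+1)" and n: "n \<ge> 1"
    and ex: "\<forall>j \<le> n. D *\<^sub>v vpow x j = (if j = 0 then 0\<^sub>v (n+1) else of_nat j \<cdot>\<^sub>v vpow x (j - 1))"
    and d: "degree p \<le> n"
  shows "D *\<^sub>v ev n x p = ev n x (pderiv p)"
proof (rule eq_vecI)
  show "dim_vec (D *\<^sub>v ev n x p) = dim_vec (ev n x (pderiv p))" using D by (simp add: ev_def)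
  fix i assume "i < dim_vec (ev n x (pderiv p))"
  then have i: "i < n+1" by (simp add: ev_def)
  obtain m where m: "n = Suc m" using n by (cases n) auto
  have vd: "dim_vec (vpow x j) = n+1" for j using x by (simp add: vpow_def)
  have "(D *\<^sub>v ev n x p) $ i = row D i \<bullet> ev n x p" using D i by simp
  also have "\<dots> = (\<Sum>j\<le>n. coeff p j * (row D i \<bullet> vpow x j))"
    by (rule scalar_ev) (use D i x d in auto)
  also have "\<dots> = (\<Sum>j\<le>n. coeff p j * (if j = 0 then 0 else of_nat j * (x $ i) ^ (j - 1)))"
  proof (rule sum.cong[OF refl])
    fix j assume j: "j \<in> {..n}"
    have "row D i \<bullet> vpow x j = (D *\<^sub>v vpow x j) $ i" using D i by simp
    also have "\<dots> = (if j = 0 then 0 else of_nat j * (x $ i) ^ (j - 1))"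
      using ex j i x by (simp add: vpow_def)
    finally show "coeff p j * (row D i \<bullet> vpow x j) = coeff p j * (if j = 0 then 0 else of_nat j * (x $ i) ^ (j - 1))" by simp
  qed
  also have "\<dots> = (\<Sum>j\<le>m. coeff p (Suc j) * (of_nat (Suc j) * (x $ i) ^ j))"
    unfolding m by (subst sum.atMost_Suc_shift) simp
  also have "\<dots> = (\<Sum>j\<le>m. coeff (pderiv p) j * (x $ i) ^ j)"
    by (simp add: coeff_pderiv mult_ac)
  also have "\<dots> = poly (pderiv p) (x $ i)"
    by (rule poly_sum_bound[symmetric]) (use d m in \<open>simp add: degree_pderiv\<close>)
  finally show "(D *\<^sub>v ev n x p) $ i = ev n x (pderiv p) $ i" using i by (simp add: ev_def)
qed

lemma p0_ev:
  assumes p0: "p0 \<in> carrier_vec (n+1)" and x: "x \<in> carrier_vec (n+1)"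
    and ex: "\<forall>j \<le> n. p0 \<bullet> vpow x j = a ^ j" and d: "degree p \<le> n"
  shows "p0 \<bullet> ev n x p = poly p a"
  using scalar_ev[OF p0 x d] ex poly_sum_bound[OF d, of a] by simp

lemma ev_smult: "ev n x (Polynomial.smult c p) = c \<cdot>\<^sub>v ev n x p"
  by (rule eq_vecI) (auto simp: ev_def)

lemma ev_zero: "ev n x 0 = 0\<^sub>v (n+1)"
  by (rule eq_vecI) (auto simp: ev_def)

lemma kernel_lemma:
  assumes D: "D \<in> carrier_mat (n+1) (n+1)" and x: "x \<in> carrier_vec (n+1)" and n: "n \<ge> 1"
    and ex: "\<forall>j \<le> n. D *\<^sub>v vpow x j = (if j = 0 then 0\<^sub>v (n+1) else of_nat j \<cdot>\<^sub>v vpow x (j - 1))"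
    and p0: "p0 \<in> carrier_vec (n+1)" and ex0: "\<forall>j \<le> n. p0 \<bullet> vpow x j = a ^ j"
    and dist: "\<forall>i < n+1. \<forall>j < n+1. i \<noteq> j \<longrightarrow> x $ i \<noteq> x $ j"
    and r: "r \<in> carrier_vec (n+1)" and s: "s \<in> carrier_vec (n+1)"
    and Dr: "D *\<^sub>v r = (- \<beta>) \<cdot>\<^sub>v s" and Ds: "D *\<^sub>v s = \<beta> \<cdot>\<^sub>v r"
    and r0: "p0 \<bullet> r = 0" and s0: "p0 \<bullet> s = 0"
  shows "r = 0\<^sub>v (n+1) \<and> s = 0\<^sub>v (n+1)"
proof -
  obtain p where dp: "degree p \<le> n" and rp: "r = ev n x p" using ev_surj[OF x dist r] by blast
  obtain q where dq: "degree q \<le> n" and sq: "s = ev n x q" using ev_surj[OF x dist s] by blast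
  have dpp: "degree (pderiv p) \<le> n" "degree (pderiv q) \<le> n"
    using dp dq by (auto simp: degree_pderiv)
  have dsm: "degree (Polynomial.smult c p) \<le> n" "degree (Polynomial.smult c q) \<le> n" for c
    using dp dq degree_smult_le le_trans by blast+
  have e1: "pderiv p = Polynomial.smult (- \<beta>) q"
    by (rule ev_inj[OF x dist dpp(1) dsm(2)]) (use Dr Dp_ev[OF D x n ex dp] in \<open>simp add: rp sq ev_smult[symmetric]\<close>)
  have e2: "pderiv q = Polynomial.smult \<beta> p"
    by (rule ev_inj[OF x dist dpp(2) dsm(1)]) (use Ds Dp_ev[OF D x n ex dq] in \<open>simp add: rp sq ev_smult[symmetric]\<close>)
  have pa: "poly p a = 0" using p0_ev[OF p0 x ex0 dp] r0 rp by simp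
  have qa: "poly q a = 0" using p0_ev[OF p0 x ex0 dq] s0 sq by simp
  have "p = 0 \<and> q = 0"
  proof (cases "\<beta> = 0")
    case True
    then have "pderiv p = 0" "pderiv q = 0" using e1 e2 by auto
    then obtain h k where "p = [:h:]" "q = [:k:]" using pderiv_iszero by blast
    then show ?thesis using pa qa by simp
  next
    case False
    show ?thesis
    proof (cases "p = 0")
      case True
      then show ?thesis using e1 False by simp
    next
      case pn: False
      have "pderiv (pderiv p) = Polynomial.smult (- \<beta> * \<beta>) p"
        using e1 e2 by (simp add: pderiv_smult pderiv_minus)
      then have "degree (pderiv (pderiv p)) = degree p"
        using False by simp
      then have "degree p - 1 - 1 = degree p"
        by (simp only: degree_pderiv)
      then have "degree p = 0" by simp
      then have "pderiv p = 0" by (simp add: degree_pderiv pderiv_eq_0_iff)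
      then have "q = 0" using e1 False by simp
      then have "p = 0" using e2 False by simp
      then show ?thesis using pn by simp
    qed
  qed
  then show ?thesis using rp sq by (simp add: ev_zero)
qed

lemma mat_inv_props:
  assumes H: "H \<in> carrier_mat m m" and pd: "pos_def_mat H"
  shows "mat_inv H \<in> carrier_mat m m \<and> H * mat_inv H = 1\<^sub>m m \<and> mat_inv H * H = 1\<^sub>m m"
proof -
  have "det H \<noteq> 0"
  proof
    assume "det H = 0"
    then obtain v where v: "v \<in> carrier_vec m" "v \<noteq> 0\<^sub>v m" "H *\<^sub>v v = 0\<^sub>v m"
      using det_0_iff_vec_prod_zero[OF H] by blast
    then have "v \<bullet> (H *\<^sub>v v) > 0" using pd H unfolding pos_def_mat_def by auto
    then show False using v by simp
  qed
  from det_non_zero_imp_unit[OF H this, of "()"]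
  obtain B where B: "B \<in> carrier_mat m m" "B * H = 1\<^sub>m m" "H * B = 1\<^sub>m m"
    unfolding Units_def by (auto simp: ring_mat_def)
  then have "\<exists>B. B \<in> carrier_mat (dim_row H) (dim_row H) \<and> H * B = 1\<^sub>m (dim_row H) \<and> B * H = 1\<^sub>m (dim_row H)"
    using H by auto
  from someI_ex[OF this] show ?thesis using H unfolding mat_inv_def by auto
qed

lemma re_part:
  assumes A: "A \<in> carrier_mat m m" and v: "v \<in> carrier_vec m"
  shows "map_vec Re (map_mat complex_of_real A *\<^sub>v v) = A *\<^sub>v map_vec Re v"
    and "map_vec Im (map_mat complex_of_real A *\<^sub>v v) = A *\<^sub>v map_vec Im v"
  using A v by (auto intro!: eq_vecI simp: scalar_prod_def Re_sum Im_sum)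

lemma outer_mult:
  assumes p: "p \<in> carrier_vec m" and w: "w \<in> carrier_vec m"
  shows "outer p p *\<^sub>v w = (p \<bullet> w) \<cdot>\<^sub>v p"
  using p w by (auto intro!: eq_vecI simp: outer_def scalar_prod_def sum_distrib_left mult_ac)

lemma comb_mult:
  assumes p0: "p0 \<in> carrier_vec m" and pn: "pn \<in> carrier_vec m" and S: "S \<in> carrier_mat m m"
    and w: "w \<in> carrier_vec m"
  shows "(- outer p0 p0 + outer pn pn + S) *\<^sub>v w = (-(p0 \<bullet> w)) \<cdot>\<^sub>v p0 + (pn \<bullet> w) \<cdot>\<^sub>v pn + S *\<^sub>v w"
proof -
  have c: "outer p0 p0 \<in> carrier_mat m m" "outer pn pn \<in> carrier_mat m m"
    using p0 pn by (auto simp: outer_def)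
  have "(- outer p0 p0 + outer pn pn + S) *\<^sub>v w = - (outer p0 p0 *\<^sub>v w) + outer pn pn *\<^sub>v w + S *\<^sub>v w"
    using c S w by (simp add: add_mult_distrib_mat_vec[of _ m m] assoc_add_vec[of _ m])
  also have "\<dots> = (-(p0 \<bullet> w)) \<cdot>\<^sub>v p0 + (pn \<bullet> w) \<cdot>\<^sub>v pn + S *\<^sub>v w"
    using p0 pn w S by (auto intro!: eq_vecI simp: outer_mult)
  finally show ?thesis .
qed

lemma quadform:
  assumes H: "H \<in> carrier_mat m m" and D: "D \<in> carrier_mat m m" and S: "S \<in> carrier_mat m m"
    and p0: "p0 \<in> carrier_vec m" and pn: "pn \<in> carrier_vec m" and w: "w \<in> carrier_vec m"
    and Hs: "H\<^sup>T = H"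
    and eq: "H * D + D\<^sup>T * H = - outer p0 p0 + outer pn pn + S"
  shows "2 * (w \<bullet> (H *\<^sub>v (D *\<^sub>v w))) = -((p0 \<bullet> w)^2) + (pn \<bullet> w)^2 + w \<bullet> (S *\<^sub>v w)"
proof -
  let ?M = "H * D"
  have M: "?M \<in> carrier_mat m m" using H D by simp
  have MT: "?M\<^sup>T = D\<^sup>T * H" using transpose_mult[OF H D] Hs by simp
  have h1: "w \<bullet> (H *\<^sub>v (D *\<^sub>v w)) = w \<bullet> (?M *\<^sub>v w)" using H D w by simp
  have h3: "w \<bullet> (?M\<^sup>T *\<^sub>v w) = w \<bullet> (?M *\<^sub>v w)"
    using transpose_vec_mult_scalar[OF M w w] comm_scalar_prod[of w m "?M\<^sup>T *\<^sub>v w"] M w by simp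
  have "w \<bullet> ((?M + ?M\<^sup>T) *\<^sub>v w) = w \<bullet> (?M *\<^sub>v w) + w \<bullet> (?M\<^sup>T *\<^sub>v w)"
    using M w by (simp add: add_mult_distrib_mat_vec[of _ m m] scalar_prod_add_distrib[of _ m])
  then have "2 * (w \<bullet> (H *\<^sub>v (D *\<^sub>v w))) = w \<bullet> ((- outer p0 p0 + outer pn pn + S) *\<^sub>v w)"
    using h1 h3 MT eq by simp
  also have "\<dots> = -((p0 \<bullet> w)^2) + (pn \<bullet> w)^2 + w \<bullet> (S *\<^sub>v w)"
    using p0 pn S w comm_scalar_prod[OF p0 w] comm_scalar_prod[OF pn w]
    by (simp add: comb_mult scalar_prod_add_distrib[of _ m] power2_eq_square)
  finally show ?thesis .
qed

theorem theorem3: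
  fixes n :: nat and a b :: real and Dp Dm H S :: "real mat" and p0 pn x :: "real vec"
  assumes "n \<ge> 1" and "b > a"
    and "sbp_pair n n a b Dp Dm H S p0 pn x"
  shows "eigenvalue_property Dp H p0"
proof -
  let ?m = "n+1"
  note sb = assms(3)[unfolded sbp_pair_def]
  have D: "Dp \<in> carrier_mat ?m ?m" and H: "H \<in> carrier_mat ?m ?m" and S: "S \<in> carrier_mat ?m ?m"
    and p0: "p0 \<in> carrier_vec ?m" and pn: "pn \<in> carrier_vec ?m" and x: "x \<in> carrier_vec ?m"
    using sb by auto
  have exD: "\<forall>j \<le> n. Dp *\<^sub>v vpow x j = (if j = 0 then 0\<^sub>v (n+1) else of_nat j \<cdot>\<^sub>v vpow x (j - 1))"
    and ex0: "\<forall>j \<le> n. p0 \<bullet> vpow x j = a ^ j" using sb by auto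
  have pd: "pos_def_mat H" and eqC: "H * Dp + Dp\<^sup>T * H = - outer p0 p0 + outer pn pn + S"
    and psd: "pos_semidef_mat S"
    and dist: "\<forall>i < n+1. \<forall>j < n+1. i \<noteq> j \<longrightarrow> x $ i \<noteq> x $ j" using sb by auto
  have Hs: "H\<^sup>T = H" using pd unfolding pos_def_mat_def by auto
  define B where "B = mat_inv H"
  have B: "B \<in> carrier_mat ?m ?m" and HB: "H * B = 1\<^sub>m ?m"
    using mat_inv_props[OF H pd] unfolding B_def by auto
  define Ou where "Ou = outer p0 p0"
  have O: "Ou \<in> carrier_mat ?m ?m" using p0 by (auto simp: Ou_def outer_def)
  define Dt where "Dt = Dp + B * Ou"
  have Dt_eq: "Dtilde Dp H p0 = Dt" unfolding Dt_def B_def Ou_def Dtilde_def ..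
  have Dt: "Dt \<in> carrier_mat ?m ?m" using D B O by (simp add: Dt_def)
  have Dtv: "Dt *\<^sub>v w = Dp *\<^sub>v w + B *\<^sub>v ((p0 \<bullet> w) \<cdot>\<^sub>v p0)" if w: "w \<in> carrier_vec ?m" for w
    using D B O w by (simp add: Dt_def add_mult_distrib_mat_vec[of _ ?m ?m] Ou_def outer_mult[OF p0 w])
  have HDt: "H *\<^sub>v (Dt *\<^sub>v w) = H *\<^sub>v (Dp *\<^sub>v w) + (p0 \<bullet> w) \<cdot>\<^sub>v p0" if w: "w \<in> carrier_vec ?m" for w
  proof -
    have "H *\<^sub>v (B *\<^sub>v ((p0 \<bullet> w) \<cdot>\<^sub>v p0)) = (p0 \<bullet> w) \<cdot>\<^sub>v p0"
      using assoc_mult_mat_vec[OF H B, of "(p0 \<bullet> w) \<cdot>\<^sub>v p0"] HB p0 by simp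
    then show ?thesis using Dtv[OF w] H D B w p0 by (simp add: mult_add_distrib_mat_vec[of _ ?m ?m])
  qed
  have Hsym: "u \<bullet> (H *\<^sub>v w) = w \<bullet> (H *\<^sub>v u)" if "u \<in> carrier_vec ?m" "w \<in> carrier_vec ?m" for u w
    using transpose_vec_mult_scalar[OF H that(2) that(1)] Hs comm_scalar_prod[of "H *\<^sub>v u" ?m w] H that
    by simp
  have qf: "2 * (w \<bullet> (H *\<^sub>v (Dp *\<^sub>v w))) = -((p0 \<bullet> w)^2) + (pn \<bullet> w)^2 + w \<bullet> (S *\<^sub>v w)"
    if "w \<in> carrier_vec ?m" for w by (rule quadform[OF H D S p0 pn that Hs eqC])
  have Spos: "w \<bullet> (S *\<^sub>v w) \<ge> 0" if "w \<in> carrier_vec ?m" for w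
    using psd S that unfolding pos_semidef_mat_def by auto
  have Hpos: "w \<bullet> (H *\<^sub>v w) > 0" if "w \<in> carrier_vec ?m" "w \<noteq> 0\<^sub>v ?m" for w
    using pd H that unfolding pos_def_mat_def by auto
  have Hnn: "w \<bullet> (H *\<^sub>v w) \<ge> 0" if "w \<in> carrier_vec ?m" for w
    using Hpos[OF that] that H by (cases "w = 0\<^sub>v ?m") auto
  show ?thesis unfolding eigenvalue_property_def Dt_eq
  proof (intro allI impI)
    fix l :: complex
    assume "eigenvalue (map_mat complex_of_real Dt) l"
    then obtain v where v: "v \<in> carrier_vec ?m" and v0: "v \<noteq> 0\<^sub>v ?m"
      and ev: "map_mat complex_of_real Dt *\<^sub>v v = l \<cdot>\<^sub>v v"
      unfolding eigenvalue_def eigenvector_def using Dt by auto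
    define r where "r = map_vec Re v"
    define s where "s = map_vec Im v"
    define \<alpha> where "\<alpha> = Re l"
    define \<beta> where "\<beta> = Im l"
    have r: "r \<in> carrier_vec ?m" and s: "s \<in> carrier_vec ?m" using v by (auto simp: r_def s_def)
    have er: "Dt *\<^sub>v r = \<alpha> \<cdot>\<^sub>v r - \<beta> \<cdot>\<^sub>v s"
      proof -
      have "Dt *\<^sub>v r = map_vec Re (l \<cdot>\<^sub>v v)" using re_part(1)[OF Dt v] ev unfolding r_def by simp
      then show ?thesis using Dt v unfolding r_def s_def \<alpha>_def \<beta>_def by (auto intro!: eq_vecI)
    qed
    have es: "Dt *\<^sub>v s = \<beta> \<cdot>\<^sub>v r + \<alpha> \<cdot>\<^sub>v s"
      proof -
      have "Dt *\<^sub>v s = map_vec Im (l \<cdot>\<^sub>v v)" using re_part(2)[OF Dt v] ev unfolding s_def by simp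
      then show ?thesis using Dt v unfolding r_def s_def \<alpha>_def \<beta>_def by (auto intro!: eq_vecI)
    qed
    have rs0: "r \<noteq> 0\<^sub>v ?m \<or> s \<noteq> 0\<^sub>v ?m"
    proof (rule ccontr)
      assume "\<not> ?thesis"
      then have "r = 0\<^sub>v ?m" "s = 0\<^sub>v ?m" by auto
      have "v = 0\<^sub>v ?m"
      proof (rule eq_vecI)
        fix i assume "i < dim_vec (0\<^sub>v ?m :: complex vec)"
        then have i: "i < ?m" by simp
        have "r $ i = 0" "s $ i = 0" using \<open>r = 0\<^sub>v ?m\<close> \<open>s = 0\<^sub>v ?m\<close> i by auto
        then show "v $ i = 0\<^sub>v ?m $ i" using v i unfolding r_def s_def by (auto intro: complex_eqI)
      qed (use v in auto)
      then show False using v0 by simp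
    qed
    define Q where "Q = r \<bullet> (H *\<^sub>v r) + s \<bullet> (H *\<^sub>v s)"
    have Qpos: "Q > 0" using rs0 Hpos[OF r] Hpos[OF s] Hnn[OF r] Hnn[OF s] unfolding Q_def by auto
    have e1: "r \<bullet> (H *\<^sub>v (Dp *\<^sub>v r)) + (p0 \<bullet> r)^2 = \<alpha> * (r \<bullet> (H *\<^sub>v r)) - \<beta> * (r \<bullet> (H *\<^sub>v s))"
    proof -
      have "r \<bullet> (H *\<^sub>v (Dt *\<^sub>v r)) = r \<bullet> (H *\<^sub>v (Dp *\<^sub>v r)) + (p0 \<bullet> r)^2"
        using HDt[OF r] r H D p0 comm_scalar_prod[OF p0 r]
        by (simp add: scalar_prod_add_distrib[of _ ?m] power2_eq_square)
      moreover have "r \<bullet> (H *\<^sub>v (Dt *\<^sub>v r)) = \<alpha> * (r \<bullet> (H *\<^sub>v r)) - \<beta> * (r \<bullet> (H *\<^sub>v s))"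
        using er r s H by (simp add: mult_minus_distrib_mat_vec[of _ ?m ?m] scalar_prod_minus_distrib[of _ ?m] mult_mat_vec[of _ ?m ?m])
      ultimately show ?thesis by simp
    qed
    have e2: "s \<bullet> (H *\<^sub>v (Dp *\<^sub>v s)) + (p0 \<bullet> s)^2 = \<beta> * (s \<bullet> (H *\<^sub>v r)) + \<alpha> * (s \<bullet> (H *\<^sub>v s))"
    proof -
      have "s \<bullet> (H *\<^sub>v (Dt *\<^sub>v s)) = s \<bullet> (H *\<^sub>v (Dp *\<^sub>v s)) + (p0 \<bullet> s)^2"
        using HDt[OF s] s H D p0 comm_scalar_prod[OF p0 s]
        by (simp add: scalar_prod_add_distrib[of _ ?m] power2_eq_square)
      moreover have "s \<bullet> (H *\<^sub>v (Dt *\<^sub>v s)) = \<beta> * (s \<bullet> (H *\<^sub>v r)) + \<alpha> * (s \<bullet> (H *\<^sub>v s))"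
        using es r s H by (simp add: mult_add_distrib_mat_vec[of _ ?m ?m] scalar_prod_add_distrib[of _ ?m] mult_mat_vec[of _ ?m ?m])
      ultimately show ?thesis by simp
    qed
    have key: "2 * \<alpha> * Q = (p0 \<bullet> r)^2 + (pn \<bullet> r)^2 + r \<bullet> (S *\<^sub>v r) + (p0 \<bullet> s)^2 + (pn \<bullet> s)^2 + s \<bullet> (S *\<^sub>v s)"
      using e1 e2 qf[OF r] qf[OF s] Hsym[OF r s] unfolding Q_def by (simp add: algebra_simps)
    have nn: "0 \<le> (pn \<bullet> r)^2 + r \<bullet> (S *\<^sub>v r) + (pn \<bullet> s)^2 + s \<bullet> (S *\<^sub>v s)"
      using Spos[OF r] Spos[OF s] by simp
    show "Re l > 0"
    proof (rule ccontr)
      assume "\<not> Re l > 0"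
      then have al: "\<alpha> \<le> 0" unfolding \<alpha>_def by simp
      have "2 * \<alpha> * Q \<le> 0" using al Qpos by (simp add: mult_nonpos_nonneg)
      then have z: "(p0 \<bullet> r)^2 + (p0 \<bullet> s)^2 \<le> 0" using key nn by simp
      have "(p0 \<bullet> r)^2 + (p0 \<bullet> s)^2 = 0" using z
        by (smt (verit) zero_le_power2)
      then have pr: "p0 \<bullet> r = 0" and ps: "p0 \<bullet> s = 0"
        by (simp_all add: sum_power2_eq_zero_iff)
      have "2 * \<alpha> * Q = 0" using key nn z \<open>2 * \<alpha> * Q \<le> 0\<close> pr ps by simp
      then have a0: "\<alpha> = 0" using Qpos by simp
      have B0: "B *\<^sub>v (0 \<cdot>\<^sub>v p0) = 0\<^sub>v ?m" using B p0 by (auto intro!: eq_vecI)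
      have "Dt *\<^sub>v r = Dp *\<^sub>v r" using Dtv[OF r] pr B0 D r by simp
      then have "Dp *\<^sub>v r = \<alpha> \<cdot>\<^sub>v r - \<beta> \<cdot>\<^sub>v s" using er by simp
      then have Dr: "Dp *\<^sub>v r = (- \<beta>) \<cdot>\<^sub>v s"
        using a0 r s by (auto intro!: eq_vecI)
      have "Dt *\<^sub>v s = Dp *\<^sub>v s" using Dtv[OF s] ps B0 D s by simp
      then have "Dp *\<^sub>v s = \<beta> \<cdot>\<^sub>v r + \<alpha> \<cdot>\<^sub>v s" using es by simp
      then have Ds: "Dp *\<^sub>v s = \<beta> \<cdot>\<^sub>v r"
        using a0 r s by (auto intro!: eq_vecI)
      have "r = 0\<^sub>v ?m \<and> s = 0\<^sub>v ?m"
        by (rule kernel_lemma[OF D x assms(1) exD p0 ex0 dist r s Dr Ds pr ps])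
      then show False using rs0 by simp
    qed
  qed
qed

end
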